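(* Let $\alpha>0$ be irrational and $A=\begin{bmatrix} m_1&n_1\\ m_2&n_2\end{bmatrix}\in GL(2,\mathbb Z)$. Then $\pi(A)$ restricts to an isometric automorphism of $\mathcal A_\alpha$ if and only if $m_1+\alpha n_1>0$ and $n_1\alpha^2+(m_1-n_2)\alpha-m_2=0$.
   Context: For $f\in C(\mathbb T^2)$ (with $\mathbb T$ the unit circle), the Fourier transform is $\hat f(m,n)=\int_{\mathbb T^2} f(e^{is},e^{it})e^{-i(ms+nt)}\,d\mu$, $\mu$ normalized Lebesgue measure. For a positive irrational $\alpha$, $\mathcal A_\alpha=\{f\in C(\mathbb T^2): \hat f(m,n)=0 \text{ whenever } m+\alpha n<0\}$, a uniform algebra with the sup norm on $\mathbb T^2$. For $A=\begin{bmatrix} a&b\\ c&d\end{bmatrix}\in GL(2,\mathbb Z)$, $\pi(A):C(\mathbb T^2)\to C(\mathbb T^2)$ is $\pi(A)(f)=f\circ\varphi$ with $\varphi(z,w)=(z^aw^b,z^cw^d)$. *)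

theory Defs
  imports "HOL-Analysis.Analysis"
begin

definition torus2 :: "(complex \<times> complex) set" where
  "torus2 = sphere 0 1 \<times> sphere 0 1"

text \<open>Elements of C(T^2): continuous complex functions on T^2
  (values off T^2 are irrelevant and are ignored everywhere below).\<close>
definition CT2 :: "(complex \<times> complex \<Rightarrow> complex) set" where
  "CT2 = {f. continuous_on torus2 f}"

definition fourier2 :: "(complex \<times> complex \<Rightarrow> complex) \<Rightarrow> int \<Rightarrow> int \<Rightarrow> complex" where
  "fourier2 f m n =
     integral (cbox (0,0) (2*pi, 2*pi))
       (\<lambda>(s,t). f (cis s, cis t) * cis (- (of_int m * s + of_int n * t)))
     / complex_of_real (4 * pi\<^sup>2)"

definition A_alpha :: "real \<Rightarrow> (complex \<times> complex \<Rightarrow> complex) set" where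
  "A_alpha \<alpha> = {f \<in> CT2. \<forall>m n. real_of_int m + \<alpha> * real_of_int n < 0 \<longrightarrow> fourier2 f m n = 0}"

definition phiA :: "int \<Rightarrow> int \<Rightarrow> int \<Rightarrow> int \<Rightarrow> complex \<times> complex \<Rightarrow> complex \<times> complex" where
  "phiA a b c d = (\<lambda>(z,w). (z powi a * w powi b, z powi c * w powi d))"

definition piA :: "int \<Rightarrow> int \<Rightarrow> int \<Rightarrow> int \<Rightarrow> (complex \<times> complex \<Rightarrow> complex) \<Rightarrow> (complex \<times> complex \<Rightarrow> complex)" where
  "piA a b c d f = f \<circ> phiA a b c d"

definition supnorm :: "(complex \<times> complex \<Rightarrow> complex) \<Rightarrow> real" where
  "supnorm f = (SUP p\<in>torus2. cmod (f p))"

definition restricts_isometric_automorphism ::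
  "int \<Rightarrow> int \<Rightarrow> int \<Rightarrow> int \<Rightarrow> real \<Rightarrow> bool" where
  "restricts_isometric_automorphism a b c d \<alpha> \<longleftrightarrow>
     (\<forall>f\<in>A_alpha \<alpha>. piA a b c d f \<in> A_alpha \<alpha>) \<and>
     (\<forall>f\<in>A_alpha \<alpha>. supnorm (piA a b c d f) = supnorm f) \<and>
     (\<forall>f\<in>A_alpha \<alpha>. \<forall>g\<in>A_alpha \<alpha>.
        (\<forall>p\<in>torus2. piA a b c d f p = piA a b c d g p) \<longrightarrow> (\<forall>p\<in>torus2. f p = g p)) \<and>
     (\<forall>g\<in>A_alpha \<alpha>. \<exists>f\<in>A_alpha \<alpha>. \<forall>p\<in>torus2. piA a b c d f p = g p)"

end

theory Submission
  imports Defs "HOL-Analysis.Kronecker_Approximation_Theorem"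
begin

lemma per1_int:
  assumes per: "\<And>x. g (x + 2*pi) = g x"
  shows "g (x + 2*pi * of_int k) = g x"
proof (induction k rule: int_induct[where k=0])
  case base
  then show ?case by simp
next
  case (step1 i)
  have "x + 2*pi * of_int (i+1) = (x + 2*pi * of_int i) + 2*pi" by (simp add: algebra_simps)
  then show ?case using step1 by (simp only: per)
next
  case (step2 i)
  have "x + 2*pi * of_int i = (x + 2*pi * of_int (i - 1)) + 2*pi" by (simp add: algebra_simps)
  then show ?case using step2 by (simp only: per)
qed

lemma int_shift_period:
  fixes g :: "real \<Rightarrow> complex"
  assumes cont: "continuous_on UNIV g" and per: "\<And>x. g (x + 2*pi) = g x"
  shows "integral {0..2*pi} (\<lambda>s. g (s + c)) = integral {0..2*pi} g"
proof -
  define k where "k = floor (c/(2*pi))"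
  define r where "r = c - 2*pi * of_int k"
  have k1: "of_int k \<le> c/(2*pi)" "c/(2*pi) < of_int k + 1" unfolding k_def by linarith+
  have r: "0 \<le> r" "r < 2*pi"
  proof -
    have "2*pi * of_int k \<le> c" using k1(1) by (simp add: field_simps)
    moreover have "c < 2*pi*(of_int k + 1)" using k1(2) by (simp add: field_simps)
    ultimately show "0 \<le> r" "r < 2*pi" unfolding r_def by (auto simp: algebra_simps)
  qed
  have int: "\<And>a b. g integrable_on {a..b}"
    using cont by (meson continuous_on_subset integrable_continuous_real subset_UNIV)
  have "(\<lambda>s. g (s + c)) = (\<lambda>s. g (s + r))"
  proof
    fix s
    have "s + c = (s + r) + 2*pi * of_int k" unfolding r_def by simp
    then show "g (s + c) = g (s + r)" using per1_int[of g, OF per] by metis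
  qed
  then have "integral {0..2*pi} (\<lambda>s. g (s + c)) = integral {0..2*pi} (g \<circ> (+) r)"
    by (simp add: o_def add.commute)
  also have "\<dots> = integral {r..2*pi+r} g"
    using integral_shift_Icc_real[of 0 "2*pi" g r] by simp
  also have "\<dots> = integral {r..2*pi} g + integral {2*pi..2*pi+r} g"
    using Henstock_Kurzweil_Integration.integral_combine[where a=r and c="2*pi" and b="2*pi+r" and f=g] r int by simp
  also have "integral {2*pi..2*pi+r} g = integral {0..r} (g \<circ> (+) (2*pi))"
    using integral_shift_Icc_real[of 0 r g "2*pi"] by (simp add: add.commute)
  also have "(g \<circ> (+) (2*pi)) = g"
    using per by (auto simp: o_def add.commute)
  also have "integral {r..2*pi} g + integral {0..r} g = integral {0..2*pi} g"
    using Henstock_Kurzweil_Integration.integral_combine[where a=0 and c=r and b="2*pi" and f=g] r int by (simp add: add.commute)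
  finally show ?thesis .
qed

lemma int_reflect_period:
  fixes g :: "real \<Rightarrow> complex"
  assumes cont: "continuous_on UNIV g" and per: "\<And>x. g (x + 2*pi) = g x"
  shows "integral {0..2*pi} (\<lambda>s. g (- s)) = integral {0..2*pi} g"
proof -
  have "integral {0..2*pi} (\<lambda>s. g (- s)) = integral {-2*pi..0} g"
    using Henstock_Kurzweil_Integration.integral_reflect_real[where a="-2*pi" and b=0 and f=g] by simp
  also have "\<dots> = integral {0..2*pi} (g \<circ> (+) (-2*pi))"
    using integral_shift_Icc_real[of 0 "2*pi" g "-2*pi"] by simp
  also have "(g \<circ> (+) (-2*pi)) = g"
  proof
    fix x
    have "g (x + 2*pi * of_int (-1)) = g x" using per1_int[of g, OF per] .
    then show "(g \<circ> (+) (-2*pi)) x = g x" by (simp add: o_def add.commute)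
  qed
  finally show ?thesis .
qed

lemma int_affine_period:
  fixes g :: "real \<Rightarrow> complex"
  assumes cont: "continuous_on UNIV g" and per: "\<And>x. g (x + 2*pi) = g x"
    and e: "e = 1 \<or> e = -1"
  shows "integral {0..2*pi} (\<lambda>s. g (e * s + c)) = integral {0..2*pi} g"
  using e
proof
  assume "e = 1"
  then show ?thesis using int_shift_period[OF cont per, of c] by (simp only: mult_1)
next
  assume e1: "e = -1"
  define h where "h = (\<lambda>x. g (x + c))"
  have ch: "continuous_on UNIV h" unfolding h_def
    by (rule continuous_on_compose2[OF cont]) (auto intro!: continuous_intros)
  have ph: "\<And>x. h (x + 2*pi) = h x" unfolding h_def using per
    by (metis add.commute add.left_commute)
  have "integral {0..2*pi} (\<lambda>s. g (e * s + c)) = integral {0..2*pi} (\<lambda>s. h (- s))"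
    using e1 by (simp add: h_def add.commute)
  also have "\<dots> = integral {0..2*pi} h" using int_reflect_period[OF ch ph] .
  also have "\<dots> = integral {0..2*pi} g" unfolding h_def using int_shift_period[OF cont per] .
  finally show ?thesis .
qed

definition per2 :: "(real \<times> real \<Rightarrow> complex) \<Rightarrow> bool" where
  "per2 G \<longleftrightarrow> continuous_on UNIV G \<and> (\<forall>x y. G (x + 2*pi, y) = G (x, y)) \<and>
      (\<forall>x y. G (x, y + 2*pi) = G (x, y))"

definition Jt :: "(real \<times> real \<Rightarrow> complex) \<Rightarrow> complex" where
  "Jt G = integral (cbox (0,0) (2*pi, 2*pi)) G"

definition linr :: "real \<Rightarrow> real \<Rightarrow> real \<Rightarrow> real \<Rightarrow> (real \<times> real \<Rightarrow> complex) \<Rightarrow> (real \<times> real \<Rightarrow> complex)" where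
  "linr a b c d G = (\<lambda>p. G (a * fst p + b * snd p, c * fst p + d * snd p))"

abbreviation lini :: "int \<Rightarrow> int \<Rightarrow> int \<Rightarrow> int \<Rightarrow> (real \<times> real \<Rightarrow> complex) \<Rightarrow> (real \<times> real \<Rightarrow> complex)" where
  "lini a b c d \<equiv> linr (of_int a) (of_int b) (of_int c) (of_int d)"

lemma per2_int:
  assumes "per2 G"
  shows "G (x + 2*pi * of_int k, y + 2*pi * of_int l) = G (x, y)"
proof -
  have "G (x + 2*pi * of_int k, y + 2*pi * of_int l) = G (x + 2*pi * of_int k, y)"
    using per1_int[of "\<lambda>y. G (x + 2*pi * of_int k, y)"] assms unfolding per2_def by blast
  also have "\<dots> = G (x, y)"
    using per1_int[of "\<lambda>x. G (x, y)"] assms unfolding per2_def by blast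
  finally show ?thesis .
qed

lemma per2_cont: "per2 G \<Longrightarrow> continuous_on UNIV G"
  by (simp add: per2_def)

lemma per2_cont1: "per2 G \<Longrightarrow> continuous_on UNIV (\<lambda>u. G (u, y))"
  by (rule continuous_on_compose2[of UNIV G]) (auto simp: per2_def intro!: continuous_intros)

lemma per2_cont2: "per2 G \<Longrightarrow> continuous_on UNIV (\<lambda>u. G (x, u))"
  by (rule continuous_on_compose2[of UNIV G]) (auto simp: per2_def intro!: continuous_intros)

lemma cont_linr: "continuous_on UNIV G \<Longrightarrow> continuous_on UNIV (linr a b c d G)"
  unfolding linr_def
  by (rule continuous_on_compose2[of UNIV G]) (auto intro!: continuous_intros)

lemma per2_lini: assumes "per2 G" shows "per2 (lini a b c d G)"
proof -
  have "lini a b c d G (x + 2*pi, y) = lini a b c d G (x, y)" for x y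
  proof -
    have "lini a b c d G (x + 2*pi, y) =
       G ((of_int a * x + of_int b * y) + 2*pi * of_int a, (of_int c * x + of_int d * y) + 2*pi * of_int c)"
      unfolding linr_def by (simp add: algebra_simps)
    also have "\<dots> = lini a b c d G (x, y)" using per2_int[OF assms] unfolding linr_def by simp
    finally show ?thesis .
  qed
  moreover have "lini a b c d G (x, y + 2*pi) = lini a b c d G (x, y)" for x y
  proof -
    have "lini a b c d G (x, y + 2*pi) =
       G ((of_int a * x + of_int b * y) + 2*pi * of_int b, (of_int c * x + of_int d * y) + 2*pi * of_int d)"
      unfolding linr_def by (simp add: algebra_simps)
    also have "\<dots> = lini a b c d G (x, y)" using per2_int[OF assms] unfolding linr_def by simp
    finally show ?thesis .
  qed
  ultimately show ?thesis using cont_linr[OF per2_cont[OF assms]] unfolding per2_def by blast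
qed

lemma per2_swap: assumes "per2 G" shows "per2 (\<lambda>p. G (snd p, fst p))"
  using assms unfolding per2_def
  by (auto intro!: continuous_on_compose2[of UNIV G] continuous_intros)

lemma Jt_swap:
  assumes "continuous_on UNIV H"
  shows "Jt (\<lambda>p. H (snd p, fst p)) = Jt H"
proof -
  have "integral (cbox (0,0) (2*pi,2*pi)) (\<lambda>(x,y). H (x,y)) =
        integral (cbox (0,0) (2*pi,2*pi)) (\<lambda>(x,y). H (y,x))"
    by (rule integral_swap_2dim[where f="\<lambda>x y. H (x,y)"]) (use assms in \<open>auto intro: continuous_on_subset\<close>)
  moreover have "(\<lambda>(x,y). H (y,x)) = (\<lambda>p. H (snd p, fst p))" by auto
  ultimately show ?thesis unfolding Jt_def by simp
qed

lemma Jt_fub1: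
  assumes "continuous_on UNIV H"
  shows "Jt H = integral {0..2*pi} (\<lambda>x. integral {0..2*pi} (\<lambda>y. H (x, y)))"
  unfolding Jt_def
  using integral_prod_continuous[of 0 0 "2*pi" "2*pi" H] assms continuous_on_subset
  by (metis box_real(2) subset_UNIV)

lemma Jt_fub2:
  assumes "continuous_on UNIV H"
  shows "Jt H = integral {0..2*pi} (\<lambda>y. integral {0..2*pi} (\<lambda>x. H (x, y)))"
proof -
  have c: "continuous_on UNIV (\<lambda>p. H (snd p, fst p))"
    by (rule continuous_on_compose2[of UNIV H]) (use assms in \<open>auto intro!: continuous_intros\<close>)
  have "Jt H = Jt (\<lambda>p. H (snd p, fst p))" using Jt_swap[OF assms] by simp
  also have "\<dots> = integral {0..2*pi} (\<lambda>y. integral {0..2*pi} (\<lambda>x. H (x, y)))"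
    using Jt_fub1[OF c] by simp
  finally show ?thesis .
qed

lemma J_base:
  assumes G: "per2 G" and a: "a = 1 \<or> a = -1" and d: "d = 1 \<or> d = -1"
  shows "Jt (linr a b 0 d G) = Jt G"
proof -
  have cG: "continuous_on UNIV G" using G by (simp add: per2_def)
  have "Jt (linr a b 0 d G) = integral {0..2*pi} (\<lambda>t. integral {0..2*pi} (\<lambda>s. G (a * s + b * t, d * t)))"
    using Jt_fub2[OF cont_linr[OF cG, of a b 0 d]] by (simp add: linr_def)
  also have "\<dots> = integral {0..2*pi} (\<lambda>t. integral {0..2*pi} (\<lambda>s. G (s, d * t)))"
  proof (rule integral_cong)
    fix t
    show "integral {0..2*pi} (\<lambda>s. G (a * s + b * t, d * t)) = integral {0..2*pi} (\<lambda>s. G (s, d * t))"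
      using int_affine_period[of "\<lambda>u. G (u, d * t)" a "b * t", OF per2_cont1[OF G]] G a
      unfolding per2_def by blast
  qed
  also have "\<dots> = Jt (linr 1 0 0 d G)"
    using Jt_fub2[OF cont_linr[OF cG, of 1 0 0 d]] by (simp add: linr_def)
  also have "\<dots> = integral {0..2*pi} (\<lambda>s. integral {0..2*pi} (\<lambda>t. G (s, d * t)))"
    using Jt_fub1[OF cont_linr[OF cG, of 1 0 0 d]] by (simp add: linr_def)
  also have "\<dots> = integral {0..2*pi} (\<lambda>s. integral {0..2*pi} (\<lambda>t. G (s, t)))"
  proof (rule integral_cong)
    fix s
    show "integral {0..2*pi} (\<lambda>t. G (s, d * t)) = integral {0..2*pi} (\<lambda>t. G (s, t))"
      using int_affine_period[of "\<lambda>u. G (s, u)" d 0, OF per2_cont2[OF G]] G d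
      unfolding per2_def by simp
  qed
  also have "\<dots> = Jt G" using Jt_fub1[OF cG] by simp
  finally show ?thesis .
qed

lemma linr_comp:
  "linr a b c d (linr a' b' c' d' G) = linr (a'*a + b'*c) (a'*b + b'*d) (c'*a + d'*c) (c'*b + d'*d) G"
  unfolding linr_def by (rule ext) (simp add: algebra_simps)

lemma unit_int: "(x::int) * y = 1 \<or> x * y = -1 \<Longrightarrow> (real_of_int x = 1 \<or> real_of_int x = -1) \<and> (real_of_int y = 1 \<or> real_of_int y = -1)"
  using zmult_eq_1_iff[of x y] zmult_eq_neg1_iff[of x y] by auto

lemma J_inv_aux:
  "nat (\<bar>a\<bar> + \<bar>c\<bar>) = n \<Longrightarrow> per2 G \<Longrightarrow> a*d - b*c = 1 \<or> a*d - b*c = -1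
    \<Longrightarrow> Jt (lini a b c d G) = Jt G"
proof (induction n arbitrary: a b c d G rule: less_induct)
  case (less n)
  have G: "per2 G" by fact
  have cG: "continuous_on UNIV G" using G by (simp add: per2_def)
  consider "c = 0" | "a = 0" | "a \<noteq> 0" "c \<noteq> 0" "\<bar>c\<bar> \<le> \<bar>a\<bar>" | "a \<noteq> 0" "c \<noteq> 0" "\<bar>a\<bar> < \<bar>c\<bar>"
    by linarith
  then show ?case
  proof cases
    case 1
    then have "a * d = 1 \<or> a * d = -1" using less.prems by simp
    from unit_int[OF this] have "real_of_int a = 1 \<or> real_of_int a = -1" "real_of_int d = 1 \<or> real_of_int d = -1"
      by auto
    then show ?thesis using J_base[OF G] 1 by simp
  next
    case 2
    then have "c * b = 1 \<or> c * b = -1" using less.prems by (auto simp: algebra_simps)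
    from unit_int[OF this] have u: "real_of_int c = 1 \<or> real_of_int c = -1" "real_of_int b = 1 \<or> real_of_int b = -1"
      by auto
    define G' where "G' = (\<lambda>p. G (snd p, fst p))"
    have G': "per2 G'" unfolding G'_def using per2_swap[OF G] .
    have "lini a b c d G = linr (of_int c) (of_int d) 0 (of_int b) G'"
      unfolding G'_def linr_def using 2 by (auto simp: algebra_simps)
    then have "Jt (lini a b c d G) = Jt G'" using J_base[OF G' u] by simp
    also have "\<dots> = Jt G" unfolding G'_def using Jt_swap[OF cG] .
    finally show ?thesis .
  next
    case 3
    define e :: int where "e = (if (0 < a) = (0 < c) then 1 else -1)"
    have lt: "\<bar>a - e * c\<bar> < \<bar>a\<bar>" using 3 unfolding e_def by (auto simp: abs_if)
    define G1 where "G1 = lini 1 e 0 1 G"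
    have G1: "per2 G1" unfolding G1_def using per2_lini[OF G] .
    have eq: "lini a b c d G = lini (a - e * c) (b - e * d) c d G1"
      unfolding G1_def linr_comp by (simp add: algebra_simps)
    have "Jt (lini (a - e * c) (b - e * d) c d G1) = Jt G1"
      by (rule less.IH[OF _ refl G1]) (use lt less.prems in \<open>auto simp: algebra_simps\<close>)
    also have "Jt G1 = Jt G"
    proof -
      have "e = 1 \<or> e = -1" unfolding e_def by auto
      then have "real_of_int e = 1 \<or> real_of_int e = -1" by auto
      then show ?thesis unfolding G1_def using J_base[OF G, where a=1 and b="of_int e" and d=1] by simp
    qed
    finally show ?thesis using eq by simp
  next
    case 4
    define e :: int where "e = (if (0 < a) = (0 < c) then 1 else -1)"
    have lt: "\<bar>c - e * a\<bar> < \<bar>c\<bar>" using 4 unfolding e_def by (auto simp: abs_if)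
    define G1 where "G1 = lini 1 0 e 1 G"
    have G1: "per2 G1" unfolding G1_def using per2_lini[OF G] .
    have eq: "lini a b c d G = lini a b (c - e * a) (d - e * b) G1"
      unfolding G1_def linr_comp by (simp add: algebra_simps)
    have "Jt (lini a b (c - e * a) (d - e * b) G1) = Jt G1"
      by (rule less.IH[OF _ refl G1]) (use lt less.prems in \<open>auto simp: algebra_simps\<close>)
    also have "Jt G1 = Jt G"
    proof -
      define G' where "G' = (\<lambda>p. G (snd p, fst p))"
      have G': "per2 G'" unfolding G'_def using per2_swap[OF G] .
      have "e = 1 \<or> e = -1" unfolding e_def by auto
      then have ee: "real_of_int e = 1 \<or> real_of_int e = -1" by auto
      have "Jt G1 = Jt (\<lambda>p. G1 (snd p, fst p))"
        using Jt_swap[OF per2_cont[OF G1]] by simp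
      also have "(\<lambda>p. G1 (snd p, fst p)) = linr 1 (of_int e) 0 1 G'"
        unfolding G1_def G'_def linr_def by (auto simp: algebra_simps)
      also have "Jt \<dots> = Jt G'" using J_base[OF G', where a=1 and b="of_int e" and d=1] ee by simp
      also have "\<dots> = Jt G" unfolding G'_def using Jt_swap[OF cG] .
      finally show ?thesis .
    qed
    finally show ?thesis using eq by simp
  qed
qed

lemma J_inv:
  "per2 G \<Longrightarrow> a*d - b*c = 1 \<or> a*d - b*c = -1 \<Longrightarrow> Jt (lini a b c d G) = Jt G"
  using J_inv_aux by blast

lemma torus2_cis: "p \<in> torus2 \<longleftrightarrow> (\<exists>s t. p = (cis s, cis t))"
proof
  assume "p \<in> torus2"
  then have n: "cmod (fst p) = 1" "cmod (snd p) = 1" unfolding torus2_def by (auto simp: mem_Times_iff)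
  have "fst p = cis (Arg (fst p))" "snd p = cis (Arg (snd p))"
    using n complex_norm_eq_1_exp_eq by (auto simp: cis_conv_exp)
  then show "\<exists>s t. p = (cis s, cis t)" by (metis prod.collapse)
next
  assume "\<exists>s t. p = (cis s, cis t)"
  then show "p \<in> torus2" unfolding torus2_def by auto
qed

lemma cis_in_torus2 [simp]: "(cis s, cis t) \<in> torus2"
  using torus2_cis by blast

lemma torus2_nz: "p \<in> torus2 \<Longrightarrow> fst p \<noteq> 0 \<and> snd p \<noteq> 0"
  unfolding torus2_def by (auto simp: mem_Times_iff)

lemma phi_cis: "phiA a b c d (cis s, cis t) =
    (cis (of_int a * s + of_int b * t), cis (of_int c * s + of_int d * t))"
  unfolding phiA_def by (simp add: cis_power_int cis_mult)

lemma phi_torus: "p \<in> torus2 \<Longrightarrow> phiA a b c d p \<in> torus2"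
  using torus2_cis[of p] phi_cis by auto

lemma phi_cont: "continuous_on torus2 (phiA a b c d)"
proof -
  have "phiA a b c d = (\<lambda>p. (fst p powi a * snd p powi b, fst p powi c * snd p powi d))"
    unfolding phiA_def by (auto simp: case_prod_beta)
  moreover have "continuous_on torus2 (\<lambda>p. (fst p powi a * snd p powi b, fst p powi c * snd p powi d))"
    using torus2_nz by (auto intro!: continuous_intros)
  ultimately show ?thesis by simp
qed

lemma cis_2pi_int: "cis (2*pi * of_int k) = 1"
  by (metis cis_power_int cis_2pi power_int_1_left mult.commute)

lemma cis_per_int: "cis (x + 2*pi * of_int k) = cis x"
  by (simp add: cis_mult[symmetric] cis_2pi_int)

definition Gf :: "(complex \<times> complex \<Rightarrow> complex) \<Rightarrow> int \<Rightarrow> int \<Rightarrow> real \<times> real \<Rightarrow> complex" where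
  "Gf f m n = (\<lambda>p. f (cis (fst p), cis (snd p)) * cis (- (of_int m * fst p + of_int n * snd p)))"

lemma fourier2_Jt: "fourier2 f m n = Jt (Gf f m n) / complex_of_real (4 * pi\<^sup>2)"
  unfolding fourier2_def Jt_def Gf_def by (simp add: case_prod_unfold)

lemma fourier2_cong:
  assumes "\<And>s t. f (cis s, cis t) = g (cis s, cis t)"
  shows "fourier2 f m n = fourier2 g m n"
  unfolding fourier2_Jt Gf_def using assms by simp

lemma per2_Gf:
  assumes "f \<in> CT2" shows "per2 (Gf f m n)"
proof -
  have cf: "continuous_on torus2 f" using assms by (simp add: CT2_def)
  have c1: "continuous_on UNIV (\<lambda>p::real\<times>real. f (cis (fst p), cis (snd p)))"
    by (rule continuous_on_compose2[OF cf]) (auto intro!: continuous_intros)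
  have c: "continuous_on UNIV (Gf f m n)"
    unfolding Gf_def by (intro continuous_intros c1)
  have p1: "Gf f m n (x + 2*pi, y) = Gf f m n (x, y)" for x y
  proof -
    have "cis (x + 2*pi) = cis x" using cis_per_int[of x 1] by simp
    moreover have "cis (- (of_int m * (x + 2*pi) + of_int n * y)) = cis (- (of_int m * x + of_int n * y))"
      using cis_per_int[of "- (of_int m * x + of_int n * y)" "-m"] by (simp add: algebra_simps)
    ultimately show ?thesis unfolding Gf_def by simp
  qed
  have p2: "Gf f m n (x, y + 2*pi) = Gf f m n (x, y)" for x y
  proof -
    have "cis (y + 2*pi) = cis y" using cis_per_int[of y 1] by simp
    moreover have "cis (- (of_int m * x + of_int n * (y + 2*pi))) = cis (- (of_int m * x + of_int n * y))"
      using cis_per_int[of "- (of_int m * x + of_int n * y)" "-n"] by (simp add: algebra_simps)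
    ultimately show ?thesis unfolding Gf_def by simp
  qed
  show ?thesis unfolding per2_def using c p1 p2 by blast
qed

lemma fourier_piA:
  assumes f: "f \<in> CT2" and dd: "m1*n2 - n1*m2 = dd" "dd*dd = 1"
  shows "fourier2 (piA m1 n1 m2 n2 f) m n = fourier2 f (dd*(n2*m - m2*n)) (dd*(m1*n - n1*m))"
proof -
  define m' where "m' = dd*(n2*m - m2*n)"
  define n' where "n' = dd*(m1*n - n1*m)"
  have i1: "m'*m1 + n'*m2 = m"
  proof -
    have "m'*m1 + n'*m2 = (dd*dd)*m" unfolding m'_def n'_def dd(1)[symmetric] by (simp add: algebra_simps)
    then show ?thesis using dd by simp
  qed
  have i2: "m'*n1 + n'*n2 = n"
  proof -
    have "m'*n1 + n'*n2 = (dd*dd)*n" unfolding m'_def n'_def dd(1)[symmetric] by (simp add: algebra_simps)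
    then show ?thesis using dd by simp
  qed
  have r1: "real_of_int m = of_int m' * of_int m1 + of_int n' * of_int m2"
    using i1 by (metis of_int_add of_int_mult)
  have r2: "real_of_int n = of_int m' * of_int n1 + of_int n' * of_int n2"
    using i2 by (metis of_int_add of_int_mult)
  have eq: "Gf (piA m1 n1 m2 n2 f) m n = lini m1 n1 m2 n2 (Gf f m' n')"
  proof
    fix p :: "real \<times> real"
    obtain x y where p: "p = (x, y)" by fastforce
    have "of_int m * x + of_int n * y =
       of_int m' * (of_int m1 * x + of_int n1 * y) + of_int n' * (of_int m2 * x + of_int n2 * y)"
      unfolding r1 r2 by (simp add: algebra_simps)
    then show "Gf (piA m1 n1 m2 n2 f) m n p = lini m1 n1 m2 n2 (Gf f m' n') p"
      unfolding p Gf_def linr_def piA_def by (simp add: phi_cis)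
  qed
  have det: "m1*n2 - n1*m2 = 1 \<or> m1*n2 - n1*m2 = -1"
    using dd zmult_eq_1_iff by auto
  have "Jt (Gf (piA m1 n1 m2 n2 f) m n) = Jt (Gf f m' n')"
    unfolding eq using J_inv[OF per2_Gf[OF f] det] by (simp add: algebra_simps)
  then show ?thesis unfolding fourier2_Jt m'_def n'_def by simp
qed

lemma piA_CT2: "f \<in> CT2 \<Longrightarrow> piA a b c d f \<in> CT2"
  unfolding CT2_def piA_def
  by (auto intro!: continuous_on_compose2[of torus2 f] phi_cont phi_torus)

lemma suff:
  assumes f: "f \<in> A_alpha \<alpha>" and dd: "m1*n2 - n1*m2 = dd" "dd*dd = 1"
    and L: "real_of_int m1 + \<alpha> * real_of_int n1 > 0"
    and Q: "real_of_int m2 + \<alpha> * real_of_int n2 = \<alpha> * (real_of_int m1 + \<alpha> * real_of_int n1)"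
  shows "piA m1 n1 m2 n2 f \<in> A_alpha \<alpha>"
proof -
  have fC: "f \<in> CT2" and fz: "\<And>m n. real_of_int m + \<alpha> * real_of_int n < 0 \<Longrightarrow> fourier2 f m n = 0"
    using f unfolding A_alpha_def by auto
  define l where "l = real_of_int m1 + \<alpha> * real_of_int n1"
  have "fourier2 (piA m1 n1 m2 n2 f) m n = 0" if neg: "real_of_int m + \<alpha> * real_of_int n < 0" for m n
  proof -
    define m' where "m' = dd*(n2*m - m2*n)"
    define n' where "n' = dd*(m1*n - n1*m)"
    have i1: "m'*m1 + n'*m2 = m"
    proof -
      have "m'*m1 + n'*m2 = (dd*dd)*m" unfolding m'_def n'_def dd(1)[symmetric] by (simp add: algebra_simps)
      then show ?thesis using dd by simp
    qed
    have i2: "m'*n1 + n'*n2 = n"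
    proof -
      have "m'*n1 + n'*n2 = (dd*dd)*n" unfolding m'_def n'_def dd(1)[symmetric] by (simp add: algebra_simps)
      then show ?thesis using dd by simp
    qed
    have r1: "real_of_int m = of_int m' * of_int m1 + of_int n' * of_int m2"
      using i1 by (metis of_int_add of_int_mult)
    have r2: "real_of_int n = of_int m' * of_int n1 + of_int n' * of_int n2"
      using i2 by (metis of_int_add of_int_mult)
    have "real_of_int m + \<alpha> * real_of_int n =
        of_int m' * (real_of_int m1 + \<alpha> * real_of_int n1) + of_int n' * (real_of_int m2 + \<alpha> * real_of_int n2)"
      unfolding r1 r2 by (simp add: algebra_simps)
    also have "\<dots> = l * (of_int m' + \<alpha> * of_int n')" unfolding Q l_def by (simp add: algebra_simps)
    finally have "l * (of_int m' + \<alpha> * of_int n') < 0" using neg by simp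
    moreover have "l > 0" using L l_def by simp
    ultimately have "of_int m' + \<alpha> * of_int n' < 0" by (simp add: mult_less_0_iff)
    then have "fourier2 f m' n' = 0" using fz by blast
    then show ?thesis using fourier_piA[OF fC dd] m'_def n'_def by simp
  qed
  then show ?thesis unfolding A_alpha_def using piA_CT2[OF fC] by blast
qed

lemma phi_comp_cis:
  "phiA a b c d (phiA a' b' c' d' (cis s, cis t)) =
     phiA (a*a' + b*c') (a*b' + b*d') (c*a' + d*c') (c*b' + d*d') (cis s, cis t)"
  by (simp add: phi_cis algebra_simps)

lemma phi_id: "phiA 1 0 0 1 p = p"
  unfolding phiA_def by (auto simp: case_prod_beta)

lemma phi_inv:
  assumes "p \<in> torus2" and "m1*n2 - n1*m2 = dd" "dd*dd = 1"
  shows "phiA m1 n1 m2 n2 (phiA (dd*n2) (-dd*n1) (-dd*m2) (dd*m1) p) = p"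
    and "phiA (dd*n2) (-dd*n1) (-dd*m2) (dd*m1) (phiA m1 n1 m2 n2 p) = p"
proof -
  obtain s t where p: "p = (cis s, cis t)" using assms(1) torus2_cis by blast
  have e1: "dd*(m1*n2 - n1*m2) = 1" using assms by simp
  show "phiA m1 n1 m2 n2 (phiA (dd*n2) (-dd*n1) (-dd*m2) (dd*m1) p) = p"
  proof -
    have "phiA m1 n1 m2 n2 (phiA (dd*n2) (-dd*n1) (-dd*m2) (dd*m1) p) =
      phiA (dd*(m1*n2 - n1*m2)) 0 0 (dd*(m1*n2 - n1*m2)) p"
      unfolding p phi_comp_cis by (simp add: algebra_simps)
    then show ?thesis using e1 phi_id by simp
  qed
  show "phiA (dd*n2) (-dd*n1) (-dd*m2) (dd*m1) (phiA m1 n1 m2 n2 p) = p"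
  proof -
    have "phiA (dd*n2) (-dd*n1) (-dd*m2) (dd*m1) (phiA m1 n1 m2 n2 p) =
      phiA (dd*(m1*n2 - n1*m2)) 0 0 (dd*(m1*n2 - n1*m2)) p"
      unfolding p phi_comp_cis by (simp add: algebra_simps)
    then show ?thesis using e1 phi_id by simp
  qed
qed

definition mono :: "int \<Rightarrow> int \<Rightarrow> complex \<times> complex \<Rightarrow> complex" where
  "mono p q = (\<lambda>z. fst z powi p * snd z powi q)"

lemma mono_CT2: "mono p q \<in> CT2"
  unfolding CT2_def mono_def using torus2_nz by (auto intro!: continuous_intros)

lemma I1: "integral {0..2*pi} (\<lambda>s. cis (of_int k * s)) = (if k = 0 then complex_of_real (2*pi) else 0)"
proof (cases "k = 0")
  case True
  then show ?thesis by (simp add: scaleR_conv_of_real)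
next
  case False
  have "(\<lambda>s. cis (of_int k * s)) = (\<lambda>s. exp ((\<i> * of_int k) * complex_of_real s))"
    by (rule ext) (simp add: cis_conv_exp algebra_simps)
  then have "integral {0..2*pi} (\<lambda>s. cis (of_int k * s)) =
      (exp ((\<i> * of_int k) * complex_of_real (2*pi)) - 1) / (\<i> * of_int k)"
    using integral_exp[of "2*pi" "\<i> * of_int k"] False by simp
  also have "exp ((\<i> * of_int k) * complex_of_real (2*pi)) = cis (2*pi * of_int k)"
    by (simp add: cis_conv_exp algebra_simps)
  finally show ?thesis using False by (simp add: cis_2pi_int)
qed

lemma fourier_mono: "fourier2 (mono p q) m n = (if p = m \<and> q = n then 1 else 0)"
proof -
  have eq: "Gf (mono p q) m n = (\<lambda>x. cis (of_int (p-m) * fst x) * cis (of_int (q-n) * snd x))"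
  proof
    fix x :: "real \<times> real"
    have "Gf (mono p q) m n x = cis (of_int p * fst x) * cis (of_int q * snd x) * cis (- (of_int m * fst x + of_int n * snd x))"
      unfolding Gf_def mono_def by (simp only: cis_power_int fst_conv snd_conv)
    also have "\<dots> = cis (of_int p * fst x + of_int q * snd x + - (of_int m * fst x + of_int n * snd x))"
      by (simp only: cis_mult)
    also have "of_int p * fst x + of_int q * snd x + - (of_int m * fst x + of_int n * snd x) =
        of_int (p-m) * fst x + of_int (q-n) * snd x"
      by (simp add: algebra_simps)
    also have "cis (of_int (p-m) * fst x + of_int (q-n) * snd x) = cis (of_int (p-m) * fst x) * cis (of_int (q-n) * snd x)"
      by (simp only: cis_mult)
    finally show "Gf (mono p q) m n x = cis (of_int (p-m) * fst x) * cis (of_int (q-n) * snd x)" .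
  qed
  have c: "continuous_on UNIV (\<lambda>x::real\<times>real. cis (of_int (p-m) * fst x) * cis (of_int (q-n) * snd x))"
    by (intro continuous_intros)
  have "Jt (Gf (mono p q) m n) = integral {0..2*pi} (\<lambda>x. integral {0..2*pi} (\<lambda>y. cis (of_int (p-m) * x) * cis (of_int (q-n) * y)))"
    unfolding eq using Jt_fub1[OF c] by simp
  also have "\<dots> = integral {0..2*pi} (\<lambda>x. cis (of_int (p-m) * x)) * integral {0..2*pi} (\<lambda>y. cis (of_int (q-n) * y))"
    by (simp only: integral_mult_right integral_mult_left)
  finally have J: "Jt (Gf (mono p q) m n) = (if p - m = 0 then complex_of_real (2*pi) else 0) * (if q - n = 0 then complex_of_real (2*pi) else 0)"
    by (simp only: I1)
  have nz: "complex_of_real (4 * pi\<^sup>2) \<noteq> 0" by simp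
  have e4: "complex_of_real (2*pi) * complex_of_real (2*pi) = complex_of_real (4 * pi\<^sup>2)"
    by (simp only: of_real_mult[symmetric]) (simp add: power2_eq_square)
  show ?thesis
  proof (cases "p = m \<and> q = n")
    case True
    then show ?thesis unfolding fourier2_Jt J using nz e4 by simp
  next
    case False
    then have "p - m \<noteq> 0 \<or> q - n \<noteq> 0" by auto
    then show ?thesis unfolding fourier2_Jt J using False by auto
  qed
qed

lemma mono_A: assumes "real_of_int p + \<alpha> * real_of_int q \<ge> 0" shows "mono p q \<in> A_alpha \<alpha>"
  unfolding A_alpha_def using mono_CT2 fourier_mono assms by auto

lemma nec_cond:
  assumes R: "\<forall>f\<in>A_alpha \<alpha>. piA m1 n1 m2 n2 f \<in> A_alpha \<alpha>"
    and dd: "m1*n2 - n1*m2 = dd" "dd*dd = 1"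
    and ge: "real_of_int p + \<alpha> * real_of_int q \<ge> 0"
  shows "of_int p * (real_of_int m1 + \<alpha> * real_of_int n1) + of_int q * (real_of_int m2 + \<alpha> * real_of_int n2) \<ge> 0"
proof -
  define k1 where "k1 = p*m1 + q*m2"
  define k2 where "k2 = p*n1 + q*n2"
  have inA: "piA m1 n1 m2 n2 (mono p q) \<in> A_alpha \<alpha>" using R mono_A[OF ge] by blast
  have a1: "dd*(n2*k1 - m2*k2) = p"
  proof -
    have "dd*(n2*k1 - m2*k2) = (dd*dd)*p" unfolding k1_def k2_def dd(1)[symmetric] by (simp add: algebra_simps)
    then show ?thesis using dd by simp
  qed
  have a2: "dd*(m1*k2 - n1*k1) = q"
  proof -
    have "dd*(m1*k2 - n1*k1) = (dd*dd)*q" unfolding k1_def k2_def dd(1)[symmetric] by (simp add: algebra_simps)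
    then show ?thesis using dd by simp
  qed
  have "fourier2 (piA m1 n1 m2 n2 (mono p q)) k1 k2 = 1"
    using fourier_piA[OF mono_CT2[of p q] dd, of k1 k2] a1 a2 fourier_mono by simp
  then have "\<not> (real_of_int k1 + \<alpha> * real_of_int k2 < 0)" using inA unfolding A_alpha_def by auto
  moreover have "real_of_int k1 + \<alpha> * real_of_int k2 =
     of_int p * (real_of_int m1 + \<alpha> * real_of_int n1) + of_int q * (real_of_int m2 + \<alpha> * real_of_int n2)"
    unfolding k1_def k2_def by (simp add: algebra_simps)
  ultimately show ?thesis by simp
qed

lemma nec_real:
  fixes \<alpha> L1 L2 :: real
  assumes irr: "\<alpha> \<notin> \<rat>" and L1: "L1 \<noteq> 0"
    and H: "\<And>p q::int. real_of_int p + \<alpha> * real_of_int q \<ge> 0 \<Longrightarrow> of_int p * L1 + of_int q * L2 \<ge> 0"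
  shows "L1 > 0 \<and> L2 = \<alpha> * L1"
proof -
  have "L1 \<ge> 0" using H[of 1 0] by simp
  with L1 have pos: "L1 > 0" by simp
  moreover have "L2 = \<alpha> * L1"
  proof (rule ccontr)
    assume ne: "L2 \<noteq> \<alpha> * L1"
    define c where "c = L2 - \<alpha> * L1"
    define \<delta> where "\<delta> = \<bar>c\<bar> / (L1 + 1)"
    have cne: "c \<noteq> 0" using ne c_def by simp
    have dpos: "\<delta> > 0" using cne pos \<delta>_def by simp
    have Ld: "L1 * \<delta> < \<bar>c\<bar>"
    proof -
      have "L1 * \<delta> = \<bar>c\<bar> * (L1/(L1+1))" unfolding \<delta>_def using pos by (simp add: field_simps)
      also have "\<dots> < \<bar>c\<bar> * 1" using pos cne by (intro mult_strict_left_mono) auto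
      finally show ?thesis by simp
    qed
    have key: "of_int p * L1 + of_int q * L2 = L1 * (of_int p + \<alpha> * of_int q) + of_int q * c" for p q :: int
      unfolding c_def by (simp add: algebra_simps)
    show False
    proof (cases "c < 0")
      case True
      have hd: "\<delta>/2 > 0" using dpos by simp
      obtain h k where k: "k > 0" "\<bar>of_int k * \<alpha> - of_int h - \<delta>/2\<bar> < \<delta>/2"
        using sequence_of_fractional_parts_is_dense[OF irr hd, where \<alpha>="\<delta>/2"] by blast
      define x where "x = of_int k * \<alpha> - of_int h"
      have x: "0 < x" "x < \<delta>" using k(2) unfolding x_def abs_less_iff by linarith+
      have "real_of_int (-h) + \<alpha> * of_int k \<ge> 0" using x x_def by (simp add: algebra_simps)
      from H[OF this] have "0 \<le> of_int (-h) * L1 + of_int k * L2" .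
      also have "\<dots> = L1 * x + of_int k * c" using key[of "-h" k] unfolding x_def by (simp add: algebra_simps)
      finally have s: "0 \<le> L1 * x + of_int k * c" .
      have a: "L1 * x < \<bar>c\<bar>" using Ld pos x by (meson less_trans mult_strict_left_mono)
      have "real_of_int k \<ge> 1" using k by simp
      then have b: "of_int k * c \<le> 1 * c" using True by (intro mult_right_mono_neg) auto
      show False using s a b True by linarith
    next
      case False
      then have cpos: "c > 0" using cne by simp
      have hd: "\<delta>/2 > 0" using dpos by simp
      obtain h k where k: "k > 0" "\<bar>of_int k * \<alpha> - of_int h - (-\<delta>/2)\<bar> < \<delta>/2"
        using sequence_of_fractional_parts_is_dense[OF irr hd, where \<alpha>="-\<delta>/2"] by blast
      define x where "x = of_int h - of_int k * \<alpha>"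
      have x: "0 < x" "x < \<delta>" using k(2) unfolding x_def abs_less_iff by linarith+
      have "real_of_int h + \<alpha> * of_int (-k) \<ge> 0" using x x_def by (simp add: algebra_simps)
      from H[OF this] have "0 \<le> of_int h * L1 + of_int (-k) * L2" .
      also have "\<dots> = L1 * x - of_int k * c" using key[of h "-k"] unfolding x_def by (simp add: algebra_simps)
      finally have s: "0 \<le> L1 * x - of_int k * c" .
      have a: "L1 * x < \<bar>c\<bar>" using Ld pos x by (meson less_trans mult_strict_left_mono)
      have "real_of_int k \<ge> 1" using k by simp
      then have b: "1 * c \<le> of_int k * c" using cpos by (intro mult_right_mono) auto
      show False using s a b cpos by linarith
    qed
  qed
  ultimately show ?thesis by blast
qed

theorem mainTheorem9:
  fixes \<alpha> :: real and m1 n1 m2 n2 :: int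
  assumes "\<alpha> > 0" and "\<alpha> \<notin> \<rat>"
    and "m1 * n2 - n1 * m2 = 1 \<or> m1 * n2 - n1 * m2 = -1"
  shows "restricts_isometric_automorphism m1 n1 m2 n2 \<alpha> \<longleftrightarrow>
           (real_of_int m1 + \<alpha> * real_of_int n1 > 0 \<and>
            real_of_int n1 * \<alpha>\<^sup>2 + real_of_int (m1 - n2) * \<alpha> - real_of_int m2 = 0)"
proof -
  define dd where "dd = m1*n2 - n1*m2"
  have dd2: "dd*dd = 1" using assms(3) dd_def by auto
  have ddeq: "m1*n2 - n1*m2 = dd" by (simp add: dd_def)
  define L1 where "L1 = real_of_int m1 + \<alpha> * real_of_int n1"
  define L2 where "L2 = real_of_int m2 + \<alpha> * real_of_int n2"
  have qd: "L2 - \<alpha> * L1 = - (real_of_int n1 * \<alpha>\<^sup>2 + real_of_int (m1 - n2) * \<alpha> - real_of_int m2)"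
    unfolding L1_def L2_def by (simp add: algebra_simps power2_eq_square)
  have L1nz: "L1 \<noteq> 0"
  proof
    assume z: "L1 = 0"
    show False
    proof (cases "n1 = 0")
      case True
      then have "m1 = 0" using z L1_def by simp
      then show False using True ddeq dd2 by simp
    next
      case False
      then have "\<alpha> = of_int (-m1) / of_int n1" using z L1_def by (simp add: field_simps)
      then have "\<alpha> \<in> \<rat>" by simp
      then show False using assms(2) by simp
    qed
  qed
  show ?thesis
  proof
    assume R: "restricts_isometric_automorphism m1 n1 m2 n2 \<alpha>"
    then have R1: "\<forall>f\<in>A_alpha \<alpha>. piA m1 n1 m2 n2 f \<in> A_alpha \<alpha>"
      unfolding restricts_isometric_automorphism_def by blast
    have "L1 > 0 \<and> L2 = \<alpha> * L1"
      by (rule nec_real[OF assms(2) L1nz]) (use nec_cond[OF R1 ddeq dd2] in \<open>simp add: L1_def L2_def\<close>)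
    then show "real_of_int m1 + \<alpha> * real_of_int n1 > 0 \<and>
            real_of_int n1 * \<alpha>\<^sup>2 + real_of_int (m1 - n2) * \<alpha> - real_of_int m2 = 0"
      using qd L1_def by simp
  next
    assume rhs: "real_of_int m1 + \<alpha> * real_of_int n1 > 0 \<and>
            real_of_int n1 * \<alpha>\<^sup>2 + real_of_int (m1 - n2) * \<alpha> - real_of_int m2 = 0"
    then have pos: "L1 > 0" and Q: "L2 = \<alpha> * L1" using qd L1_def by auto
    have ddB: "(dd*n2)*(dd*m1) - (-dd*n1)*(-dd*m2) = dd"
    proof -
      have "(dd*n2)*(dd*m1) - (-dd*n1)*(-dd*m2) = (dd*dd)*(m1*n2 - n1*m2)" by (simp add: algebra_simps)
      then show ?thesis using dd2 ddeq by simp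
    qed
    have "L1 * (real_of_int n2 - \<alpha> * real_of_int n1) - real_of_int (m1*n2 - n1*m2) = real_of_int n1 * (L2 - \<alpha> * L1)"
      unfolding L1_def L2_def by (simp add: algebra_simps power2_eq_square)
    then have "L1 * (real_of_int n2 - \<alpha> * real_of_int n1) = of_int dd" using Q ddeq by simp
    moreover have "L1 * (real_of_int (dd*n2) + \<alpha> * real_of_int (-dd*n1)) =
        of_int dd * (L1 * (real_of_int n2 - \<alpha> * real_of_int n1))"
      by (simp add: algebra_simps)
    ultimately have "L1 * (real_of_int (dd*n2) + \<alpha> * real_of_int (-dd*n1)) = of_int (dd*dd)"
      by simp
    then have "L1 * (real_of_int (dd*n2) + \<alpha> * real_of_int (-dd*n1)) > 0" using dd2 by simp
    then have LB: "real_of_int (dd*n2) + \<alpha> * real_of_int (-dd*n1) > 0"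
      using pos by (simp add: zero_less_mult_iff)
    have QB: "real_of_int (-dd*m2) + \<alpha> * real_of_int (dd*m1) =
        \<alpha> * (real_of_int (dd*n2) + \<alpha> * real_of_int (-dd*n1))"
    proof -
      have "real_of_int (-dd*m2) + \<alpha> * real_of_int (dd*m1) - \<alpha> * (real_of_int (dd*n2) + \<alpha> * real_of_int (-dd*n1))
          = of_int dd * (\<alpha> * L1 - L2)"
        unfolding L1_def L2_def by (simp add: algebra_simps power2_eq_square)
      then show ?thesis using Q by simp
    qed
    have sA: "piA m1 n1 m2 n2 f \<in> A_alpha \<alpha>" if "f \<in> A_alpha \<alpha>" for f
      using suff[OF that ddeq dd2] pos Q unfolding L1_def L2_def by blast
    have sB: "piA (dd*n2) (-dd*n1) (-dd*m2) (dd*m1) g \<in> A_alpha \<alpha>" if "g \<in> A_alpha \<alpha>" for g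
      using suff[OF that ddB dd2 LB QB] .
    have inv1: "phiA m1 n1 m2 n2 (phiA (dd*n2) (-dd*n1) (-dd*m2) (dd*m1) p) = p" if "p \<in> torus2" for p
      using phi_inv(1)[OF that ddeq dd2] .
    have inv2: "phiA (dd*n2) (-dd*n1) (-dd*m2) (dd*m1) (phiA m1 n1 m2 n2 p) = p" if "p \<in> torus2" for p
      using phi_inv(2)[OF that ddeq dd2] .
    have img: "phiA m1 n1 m2 n2 ` torus2 = torus2"
    proof
      show "phiA m1 n1 m2 n2 ` torus2 \<subseteq> torus2" using phi_torus by blast
      show "torus2 \<subseteq> phiA m1 n1 m2 n2 ` torus2"
      proof
        fix q assume q: "q \<in> torus2"
        then have "q = phiA m1 n1 m2 n2 (phiA (dd*n2) (-dd*n1) (-dd*m2) (dd*m1) q)" using inv1 by simp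
        then show "q \<in> phiA m1 n1 m2 n2 ` torus2" using phi_torus q by blast
      qed
    qed
    have c2: "supnorm (piA m1 n1 m2 n2 f) = supnorm f" for f
    proof -
      have "supnorm (piA m1 n1 m2 n2 f) = Sup ((\<lambda>q. cmod (f q)) ` (phiA m1 n1 m2 n2 ` torus2))"
        unfolding supnorm_def piA_def by (simp add: image_image)
      then show ?thesis unfolding img supnorm_def by simp
    qed
    have c3: "\<forall>p\<in>torus2. f p = g p" if "\<forall>p\<in>torus2. piA m1 n1 m2 n2 f p = piA m1 n1 m2 n2 g p" for f g
    proof
      fix q assume q: "q \<in> torus2"
      have "f q = piA m1 n1 m2 n2 f (phiA (dd*n2) (-dd*n1) (-dd*m2) (dd*m1) q)"
        unfolding piA_def using inv1[OF q] by simp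
      also have "\<dots> = piA m1 n1 m2 n2 g (phiA (dd*n2) (-dd*n1) (-dd*m2) (dd*m1) q)"
        using that phi_torus q by blast
      also have "\<dots> = g q" unfolding piA_def using inv1[OF q] by simp
      finally show "f q = g q" .
    qed
    have c4: "\<exists>f\<in>A_alpha \<alpha>. \<forall>p\<in>torus2. piA m1 n1 m2 n2 f p = g p" if "g \<in> A_alpha \<alpha>" for g
    proof (intro bexI[of _ "piA (dd*n2) (-dd*n1) (-dd*m2) (dd*m1) g"] ballI)
      fix p assume "p \<in> torus2"
      then show "piA m1 n1 m2 n2 (piA (dd*n2) (-dd*n1) (-dd*m2) (dd*m1) g) p = g p"
        unfolding piA_def using inv2 by simp
    qed (rule sB[OF that])
    show "restricts_isometric_automorphism m1 n1 m2 n2 \<alpha>"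
      unfolding restricts_isometric_automorphism_def using sA c2 c3 c4 by blast
  qed
qed

end
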